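(* Let $\varsigma=(\varsigma_1,\dots,\varsigma_K)\in\Gamma(\mathscr M_1)\oplus\dots\oplus\Gamma(\mathscr M_K)$. Then $\varsigma\in\pi(C(X))$ if and only if $\varsigma$ has the boundary decomposition property and, for every $k=1,\dots,K$ and every $x\in\overline{Y_k}$, $\varsigma_k(x)$ has a diagonal matrix representation, i.e. $\varsigma_k(x)$ maps $\mathscr V^{(i)}_x$ into itself for each $0\le i\le r_k-1$.
   Context: Let $X$ be an infinite compact metric space, $\alpha:X\to X$ a minimal homeomorphism, $\mathscr V$ a Hermitian complex line bundle over $X$, and $Y\subset X$ closed with non-empty interior. $\mathcal E=\Gamma(\mathscr V,\alpha)$ is the Hilbert $C(X)$-bimodule of continuous sections of $\mathscr V$ with right action $(\xi f)(x)=\xi(x)f(x)$, right inner product $\langle\xi(x),\eta(x)\rangle_{\mathscr V_x}$, left action $f\cdot\xi=\xi\,(f\circ\alpha)$; $\mathcal E_Y=C_0(X\setminus Y)\mathcal E$ and $\mathcal O(\mathcal E_Y)\supseteq C(X)$ is its Cuntz–Pimsner algebra. For $y\in Y$ let $r_Y(y)=\min\{n\ge1:\alpha^n(y)\in Y\}$, with distinct values $r_1<\dots<r_K$, and $Y_k=\{y\in Y:r_Y(y)=r_k\}$. Let $\mathscr V^{(0)}=X\times\mathbb C$, $\mathscr V^{(n)}=(\alpha^{n-1})^*\mathscr V\otimes\cdots\otimes\alpha^*\mathscr V\otimes\mathscr V$, so $\mathscr V^{(n)}_x=\mathscr V_{\alpha^{n-1}(x)}\otimes\cdots\otimes\mathscr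 V_x=\mathscr V^{(n-m)}_{\alpha^m(x)}\otimes\mathscr V^{(m)}_x$. Let $\mathscr D^{(n)}=\mathscr V^{(0)}\oplus\cdots\oplus\mathscr V^{(n-1)}$, $\mathscr M_k=\mathrm{End}(\mathscr D^{(r_k)})|_{\overline{Y_k}}$, $\Gamma(\mathscr M_k)$ its continuous sections. $\pi=\oplus_k\pi_k$ where $\pi_k:\mathcal O(\mathcal E_Y)\to\Gamma(\mathscr M_k)$ is the $*$-homomorphism with $\pi_k(f)(x)(a_0,\dots,a_{r_k-1})=(f(x)a_0,\dots,f(\alpha^{r_k-1}(x))a_{r_k-1})$ for $f\in C(X)$ and $\pi_k(\xi)(x)(a_0,\dots,a_{r_k-1})=(0,\xi(x)\otimes a_0,\dots,\xi(\alpha^{r_k-2}(x))\otimes a_{r_k-2})$ for $\xi\in\mathcal E_Y$, $x\in\overline{Y_k}$. Boundary decomposition property: for every $k$ and $x\in\overline{Y_k}\setminus Y_k$, with $t_1,\dots,t_m<k$ such that $r_{t_1}+\dots+r_{t_m}=r_k$ and $x\in Y_{t_1}\cap\alpha^{-r_{t_1}}(Y_{t_2})\cap\dots\cap\alpha^{-(r_{t_1}+\dots+r_{t_{m-1}})}(Y_{t_m})$, $R_0=0$, $R_s=r_{t_1}+\dots+r_{t_s}$, and the $s$-th component $\mathscr V^{(R_{s-1})}_x\oplus\dots\oplus\mathscr V^{(R_s-1)}_x$ of $\mathscr D^{(r_k)}_x$ identified with $\mathscr D^{(r_{t_s})}_{\alpha^{R_{s-1}}(x)}\otimes\mathscr V^{(R_{s-1})}_x$,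 $\varsigma_k(x)$ restricted to the $s$-th component equals $\varsigma_{t_s}(\alpha^{R_{s-1}}(x))\otimes\mathrm{id}_{\mathscr V^{(R_{s-1})}_x}$ for every $s$. *)

theory Defs
  imports "HOL-Analysis.Analysis"
begin

definition minimal_homeo :: "('a::topological_space \<Rightarrow> 'a) \<Rightarrow> bool" where
  "minimal_homeo \<alpha> \<longleftrightarrow> (\<exists>\<beta>. homeomorphism UNIV UNIV \<alpha> \<beta>) \<and>
     (\<forall>Z. closed Z \<and> \<alpha> ` Z = Z \<longrightarrow> Z = {} \<or> Z = UNIV)"

text \<open>A Hermitian complex line bundle, given by an open trivialising cover U and
 a U(1)-valued transition cocycle g: a vector v in the fibre at x has coordinates
 v_a in the chart a, and v_a = g a b x * v_b.\<close>
definition hermitian_line_bundle ::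
  "('c \<Rightarrow> 'a::topological_space set) \<Rightarrow> ('c \<Rightarrow> 'c \<Rightarrow> 'a \<Rightarrow> complex) \<Rightarrow> bool" where
  "hermitian_line_bundle U g \<longleftrightarrow>
     (\<forall>a. open (U a)) \<and> (\<Union>(range U) = UNIV) \<and>
     (\<forall>a b. continuous_on (U a \<inter> U b) (g a b)) \<and>
     (\<forall>a b x. x \<in> U a \<inter> U b \<longrightarrow> norm (g a b x) = 1) \<and>
     (\<forall>a b c x. x \<in> U a \<inter> U b \<inter> U c \<longrightarrow> g a b x * g b c x = g a c x)"

definition return_time :: "('a \<Rightarrow> 'a) \<Rightarrow> 'a set \<Rightarrow> 'a \<Rightarrow> nat" where
  "return_time \<alpha> Y y = (LEAST n. n \<ge> 1 \<and> (\<alpha> ^^ n) y \<in> Y)"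

definition nret :: "('a \<Rightarrow> 'a) \<Rightarrow> 'a set \<Rightarrow> nat" where
  "nret \<alpha> Y = card (return_time \<alpha> Y ` Y)"

definition rk :: "('a \<Rightarrow> 'a) \<Rightarrow> 'a set \<Rightarrow> nat \<Rightarrow> nat" where
  "rk \<alpha> Y k = sorted_list_of_set (return_time \<alpha> Y ` Y) ! (k - 1)"

definition Ysub :: "('a \<Rightarrow> 'a) \<Rightarrow> 'a set \<Rightarrow> nat \<Rightarrow> 'a set" where
  "Ysub \<alpha> Y k = {y \<in> Y. return_time \<alpha> Y y = rk \<alpha> Y k}"

text \<open>A tuple of charts c trivialising V^(0),...,V^(r-1) at x: the frame of
 V^(n)_x w.r.t. c is e_{c(n-1)}(\<alpha>^(n-1) x) \<otimes> ... \<otimes> e_{c 0}(x).\<close>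
definition chart_ok :: "('c \<Rightarrow> 'a set) \<Rightarrow> ('a \<Rightarrow> 'a) \<Rightarrow> nat \<Rightarrow> 'a \<Rightarrow> (nat \<Rightarrow> 'c) \<Rightarrow> bool" where
  "chart_ok U \<alpha> r x c \<longleftrightarrow> (\<forall>m<r. (\<alpha> ^^ m) x \<in> U (c m))"

text \<open>Coordinate change on V^(n)_x from chart tuple c to chart tuple c'.\<close>
definition cocyc :: "('c \<Rightarrow> 'c \<Rightarrow> 'a \<Rightarrow> complex) \<Rightarrow> ('a \<Rightarrow> 'a) \<Rightarrow> nat \<Rightarrow> (nat \<Rightarrow> 'c) \<Rightarrow> (nat \<Rightarrow> 'c) \<Rightarrow> 'a \<Rightarrow> complex" where
  "cocyc g \<alpha> n c' c x = (\<Prod>m<n. g (c' m) (c m) ((\<alpha> ^^ m) x))"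

text \<open>A continuous section over S of End(D^(r)), D^(r) = V^(0) \<oplus> ... \<oplus> V^(r-1):
 sigma x c i j is the (i,j) matrix entry (i,j < r) of the endomorphism at x w.r.t.
 the frames determined by the chart tuple c.\<close>
definition end_section ::
  "('c \<Rightarrow> 'a::topological_space set) \<Rightarrow> ('c \<Rightarrow> 'c \<Rightarrow> 'a \<Rightarrow> complex) \<Rightarrow> ('a \<Rightarrow> 'a) \<Rightarrow> nat \<Rightarrow> 'a set
     \<Rightarrow> ('a \<Rightarrow> (nat \<Rightarrow> 'c) \<Rightarrow> nat \<Rightarrow> nat \<Rightarrow> complex) \<Rightarrow> bool" where
  "end_section U g \<alpha> r S \<sigma> \<longleftrightarrow>
     (\<forall>x\<in>S. \<forall>c c'. chart_ok U \<alpha> r x c \<and> chart_ok U \<alpha> r x c' \<longrightarrow>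
        (\<forall>i<r. \<forall>j<r. \<sigma> x c' i j = cocyc g \<alpha> i c' c x * \<sigma> x c i j / cocyc g \<alpha> j c' c x)) \<and>
     (\<forall>c. \<forall>i<r. \<forall>j<r. continuous_on {x \<in> S. chart_ok U \<alpha> r x c} (\<lambda>x. \<sigma> x c i j))"

definition in_pi_CX ::
  "('c \<Rightarrow> 'a::topological_space set) \<Rightarrow> ('a \<Rightarrow> 'a) \<Rightarrow> 'a set
     \<Rightarrow> (nat \<Rightarrow> 'a \<Rightarrow> (nat \<Rightarrow> 'c) \<Rightarrow> nat \<Rightarrow> nat \<Rightarrow> complex) \<Rightarrow> bool" where
  "in_pi_CX U \<alpha> Y \<sigma> \<longleftrightarrow> (\<exists>f :: 'a \<Rightarrow> complex. continuous_on UNIV f \<and>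
     (\<forall>k\<in>{1..nret \<alpha> Y}. \<forall>x\<in>closure (Ysub \<alpha> Y k). \<forall>c. chart_ok U \<alpha> (rk \<alpha> Y k) x c \<longrightarrow>
        (\<forall>i<rk \<alpha> Y k. \<forall>j<rk \<alpha> Y k. \<sigma> k x c i j = (if i = j then f ((\<alpha> ^^ i) x) else 0))))"

definition diagonal_sections ::
  "('c \<Rightarrow> 'a::topological_space set) \<Rightarrow> ('a \<Rightarrow> 'a) \<Rightarrow> 'a set
     \<Rightarrow> (nat \<Rightarrow> 'a \<Rightarrow> (nat \<Rightarrow> 'c) \<Rightarrow> nat \<Rightarrow> nat \<Rightarrow> complex) \<Rightarrow> bool" where
  "diagonal_sections U \<alpha> Y \<sigma> \<longleftrightarrow>
     (\<forall>k\<in>{1..nret \<alpha> Y}. \<forall>x\<in>closure (Ysub \<alpha> Y k). \<forall>c. chart_ok U \<alpha> (rk \<alpha> Y k) x c \<longrightarrow>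
        (\<forall>i<rk \<alpha> Y k. \<forall>j<rk \<alpha> Y k. i \<noteq> j \<longrightarrow> \<sigma> k x c i j = 0))"

text \<open>The s-th
 block is V^(R_{s-1}) \<oplus> ... \<oplus> V^(R_s - 1); under the identification with
 D^(r_{t_s})_{\<alpha>^R_{s-1} x} \<otimes> V^(R_{s-1})_x the frames coincide, so
 "\<sigma>_k(x) restricted to block s equals \<sigma>_{t_s}(\<alpha>^R_{s-1} x) \<otimes> id" means:
 columns in block s have entries of \<sigma>_{t_s} (shifted chart tuple) in block s
 and zero outside it.\<close>
definition Rsum :: "('a \<Rightarrow> 'a) \<Rightarrow> 'a set \<Rightarrow> (nat \<Rightarrow> nat) \<Rightarrow> nat \<Rightarrow> nat" where
  "Rsum \<alpha> Y t s = (\<Sum>q=1..s. rk \<alpha> Y (t q))"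

definition boundary_decomposition ::
  "('c \<Rightarrow> 'a::topological_space set) \<Rightarrow> ('a \<Rightarrow> 'a) \<Rightarrow> 'a set
     \<Rightarrow> (nat \<Rightarrow> 'a \<Rightarrow> (nat \<Rightarrow> 'c) \<Rightarrow> nat \<Rightarrow> nat \<Rightarrow> complex) \<Rightarrow> bool" where
  "boundary_decomposition U \<alpha> Y \<sigma> \<longleftrightarrow>
     (\<forall>k\<in>{1..nret \<alpha> Y}. \<forall>x \<in> closure (Ysub \<alpha> Y k) - Ysub \<alpha> Y k. \<forall>(m::nat) (t::nat \<Rightarrow> nat).
        (\<forall>s\<in>{1..m}. 1 \<le> t s \<and> t s < k) \<and> Rsum \<alpha> Y t m = rk \<alpha> Y k \<and>
        (\<forall>s\<in>{1..m}. (\<alpha> ^^ Rsum \<alpha> Y t (s - 1)) x \<in> Ysub \<alpha> Y (t s)) \<longrightarrow>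
        (\<forall>s\<in>{1..m}. \<forall>c. chart_ok U \<alpha> (rk \<alpha> Y k) x c \<longrightarrow>
          (\<forall>j. Rsum \<alpha> Y t (s - 1) \<le> j \<and> j < Rsum \<alpha> Y t s \<longrightarrow>
            (\<forall>i<rk \<alpha> Y k. \<sigma> k x c i j =
               (if Rsum \<alpha> Y t (s - 1) \<le> i \<and> i < Rsum \<alpha> Y t s
                then \<sigma> (t s) ((\<alpha> ^^ Rsum \<alpha> Y t (s - 1)) x) (\<lambda>n. c (n + Rsum \<alpha> Y t (s - 1)))
                        (i - Rsum \<alpha> Y t (s - 1)) (j - Rsum \<alpha> Y t (s - 1))
                else 0)))))"

end

theory Submission imports Defs begin

lemma funpow_inv:
  fixes \<alpha> \<beta> :: "'a \<Rightarrow> 'a"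
  assumes "\<And>x. \<beta> (\<alpha> x) = x"
  shows "(\<beta>^^n) ((\<alpha>^^n) x) = x"
proof (induction n arbitrary: x)
  case 0 then show ?case by simp
next
  case (Suc n)
  have e1: "\<And>y. (\<beta>^^Suc n) y = (\<beta>^^n) (\<beta> y)" by (simp only: funpow_Suc_right comp_apply)
  have e2: "(\<alpha>^^Suc n) x = \<alpha> ((\<alpha>^^n) x)" by simp
  have "(\<beta>^^Suc n) ((\<alpha>^^Suc n) x) = (\<beta>^^n) (\<beta> (\<alpha> ((\<alpha>^^n) x)))"
    by (simp only: e1 e2)
  then show ?case using Suc assms by simp
qed

lemma funpow_inv_le:
  fixes \<alpha> \<beta> :: "'a \<Rightarrow> 'a"
  assumes "\<And>x. \<beta> (\<alpha> x) = x" "n \<le> m"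
  shows "(\<beta>^^n) ((\<alpha>^^m) x) = (\<alpha>^^(m-n)) x"
proof -
  have "(\<alpha>^^m) x = (\<alpha>^^n) ((\<alpha>^^(m-n)) x)"
    using assms(2) by (metis funpow_add le_add_diff_inverse comp_apply)
  then show ?thesis using funpow_inv[of \<beta> \<alpha>] assms(1) by simp
qed

lemma funpow_cont:
  fixes f :: "'a::topological_space \<Rightarrow> 'a"
  assumes "continuous_on UNIV f"
  shows "continuous_on UNIV (f^^n)"
proof (induction n)
  case 0 then show ?case by (simp add: id_def)
next
  case (Suc n)
  then show ?case
    by (simp only: funpow.simps(2)) (metis assms continuous_on_compose continuous_on_subset subset_UNIV)
qed

lemma chart_exists:
  assumes "hermitian_line_bundle U g"
  shows "chart_ok U \<alpha> r x (\<lambda>m. SOME a. (\<alpha>^^m) x \<in> U a)"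
proof -
  have "\<And>y. \<exists>a. y \<in> U a" using assms unfolding hermitian_line_bundle_def by blast
  then show ?thesis unfolding chart_ok_def by (metis someI_ex)
qed

lemma chart_indep:
  assumes "hermitian_line_bundle U g" "end_section U g \<alpha> r S \<sigma>" "x \<in> S"
    "chart_ok U \<alpha> r x c" "chart_ok U \<alpha> r x c'" "i < r"
  shows "\<sigma> x c' i i = \<sigma> x c i i"
proof -
  have "cocyc g \<alpha> i c' c x \<noteq> 0"
  proof -
    have "\<forall>m<i. g (c' m) (c m) ((\<alpha>^^m) x) \<noteq> 0"
    proof (intro allI impI)
      fix m assume "m < i"
      then have "(\<alpha>^^m) x \<in> U (c' m) \<inter> U (c m)" using assms(4,5,6) unfolding chart_ok_def by auto
      then have "norm (g (c' m) (c m) ((\<alpha>^^m) x)) = 1" using assms(1) unfolding hermitian_line_bundle_def by blast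
      then show "g (c' m) (c m) ((\<alpha>^^m) x) \<noteq> 0" by auto
    qed
    then show ?thesis unfolding cocyc_def by (simp add: prod_zero_iff)
  qed
  moreover have "\<sigma> x c' i i = cocyc g \<alpha> i c' c x * \<sigma> x c i i / cocyc g \<alpha> i c' c x"
    using assms(2,3,4,5,6) unfolding end_section_def by blast
  ultimately show ?thesis by simp
qed

lemma minimal_bound:
  fixes \<alpha> :: "'a::topological_space \<Rightarrow> 'a"
  assumes cpt: "compact (UNIV :: 'a set)" and mh: "minimal_homeo \<alpha>" and int: "interior Y \<noteq> {}"
  shows "\<exists>M. \<forall>z. \<exists>j. 1 \<le> j \<and> j \<le> M \<and> (\<alpha>^^j) z \<in> Y"
proof -
  obtain \<beta> where hom: "homeomorphism UNIV UNIV \<alpha> \<beta>" using mh unfolding minimal_homeo_def by blast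
  have ba: "\<And>x. \<beta> (\<alpha> x) = x" and ab: "\<And>x. \<alpha> (\<beta> x) = x"
    and ca: "continuous_on UNIV \<alpha>" and cb: "continuous_on UNIV \<beta>"
    using hom unfolding homeomorphism_def by auto
  define W where "W = interior Y"
  have oW: "open W" and WY: "W \<subseteq> Y" using W_def interior_subset by auto
  define Z where "Z = {z. \<forall>n. (\<alpha>^^n) z \<notin> W \<and> (\<beta>^^n) z \<notin> W}"
  have Zeq: "Z = - (\<Union>n. (\<alpha>^^n) -` W \<union> (\<beta>^^n) -` W)" unfolding Z_def by auto
  have "open (\<Union>n. (\<alpha>^^n) -` W \<union> (\<beta>^^n) -` W)"
    using funpow_cont[OF ca] funpow_cont[OF cb] oW by (intro open_UN ballI open_Un) (auto intro: open_vimage)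
  then have clZ: "closed Z" unfolding Zeq by (rule closed_Compl)
  have "\<alpha> ` Z = Z"
  proof
    show "\<alpha> ` Z \<subseteq> Z"
    proof
      fix w assume "w \<in> \<alpha> ` Z"
      then obtain z where z: "z \<in> Z" "w = \<alpha> z" by blast
      have "(\<alpha>^^n) w \<notin> W \<and> (\<beta>^^n) w \<notin> W" for n
      proof -
        have "(\<alpha>^^n) w = (\<alpha>^^Suc n) z" using z by (simp add: funpow_swap1)
        moreover have "(\<beta>^^n) w \<notin> W"
        proof (cases n)
          case 0
          have "(\<alpha>^^1) z \<notin> W" using z unfolding Z_def by blast
          then show ?thesis using 0 z by simp
        next
          case (Suc p)
          have "(\<beta>^^n) w = (\<beta>^^p) z" using z Suc ba by (simp only: funpow_Suc_right comp_apply)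
          then show ?thesis using z unfolding Z_def by auto
        qed
        ultimately show ?thesis using z unfolding Z_def by (metis (no_types, lifting) mem_Collect_eq)
      qed
      then show "w \<in> Z" unfolding Z_def by auto
    qed
    show "Z \<subseteq> \<alpha> ` Z"
    proof
      fix z assume z: "z \<in> Z"
      have "(\<alpha>^^n) (\<beta> z) \<notin> W \<and> (\<beta>^^n) (\<beta> z) \<notin> W" for n
      proof -
        have "(\<beta>^^n) (\<beta> z) = (\<beta>^^Suc n) z" by (simp add: funpow_swap1)
        moreover have "(\<alpha>^^n) (\<beta> z) \<notin> W"
        proof (cases n)
          case 0
          have "(\<beta>^^1) z \<notin> W" using z unfolding Z_def by blast
          then show ?thesis using 0 z by simp
        next
          case (Suc p)
          have "(\<alpha>^^n) (\<beta> z) = (\<alpha>^^p) z" using z Suc ab by (simp only: funpow_Suc_right comp_apply)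
          then show ?thesis using z unfolding Z_def by auto
        qed
        ultimately show ?thesis using z unfolding Z_def by (metis (no_types, lifting) mem_Collect_eq)
      qed
      then have "\<beta> z \<in> Z" unfolding Z_def by auto
      then show "z \<in> \<alpha> ` Z" using ab by (metis image_eqI)
    qed
  qed
  then have "Z = {} \<or> Z = UNIV" using mh clZ unfolding minimal_homeo_def by blast
  moreover obtain w0 where "w0 \<in> W" using int W_def by auto
  then have "w0 \<notin> Z" unfolding Z_def by (auto intro: exI[of _ 0])
  ultimately have Z0: "Z = {}" by auto
  have cov: "UNIV \<subseteq> (\<Union>n\<in>UNIV. (\<alpha>^^n) -` W \<union> (\<beta>^^n) -` W)" using Z0 unfolding Z_def by auto
  obtain J where J: "finite J" "UNIV \<subseteq> (\<Union>n\<in>J. (\<alpha>^^n) -` W \<union> (\<beta>^^n) -` W)"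
    using compactE_image[OF cpt _ cov] funpow_cont[OF ca] funpow_cont[OF cb] oW
    by (metis (no_types, lifting) open_Un open_vimage)
  obtain N where N: "\<forall>n\<in>J. n \<le> N" using J(1) finite_nat_set_iff_bounded_le by blast
  have "\<exists>j. 1 \<le> j \<and> j \<le> 2*N+1 \<and> (\<alpha>^^j) z \<in> Y" for z
  proof -
    obtain n where n: "n \<in> J" "(\<alpha>^^n) ((\<alpha>^^(N+1)) z) \<in> W \<or> (\<beta>^^n) ((\<alpha>^^(N+1)) z) \<in> W"
      using J(2) by blast
    have nN: "n \<le> N" using N n by auto
    show ?thesis
    proof (cases "(\<alpha>^^n) ((\<alpha>^^(N+1)) z) \<in> W")
      case True
      then have "(\<alpha>^^(n+(N+1))) z \<in> Y" using WY by (simp only: funpow_add comp_apply) blast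
      then show ?thesis using nN by (intro exI[of _ "n+(N+1)"]) auto
    next
      case False
      then have "(\<beta>^^n) ((\<alpha>^^(N+1)) z) \<in> W" using n by auto
      then have "(\<alpha>^^(N+1-n)) z \<in> Y" using funpow_inv_le[of \<beta> \<alpha> n "N+1" z] ba nN WY by auto
      then show ?thesis using nN by (intro exI[of _ "N+1-n"]) auto
    qed
  qed
  then show ?thesis by blast
qed

lemma rk_facts:
  fixes \<alpha> :: "'a \<Rightarrow> 'a"
  assumes fin: "finite (return_time \<alpha> Y ` Y)"
  shows "\<And>k. k \<in> {1..nret \<alpha> Y} \<Longrightarrow> rk \<alpha> Y k \<in> return_time \<alpha> Y ` Y"
    and "\<And>k k'. k \<in> {1..nret \<alpha> Y} \<Longrightarrow> k' \<in> {1..nret \<alpha> Y} \<Longrightarrow> k < k' \<Longrightarrow> rk \<alpha> Y k < rk \<alpha> Y k'"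
    and "\<And>v. v \<in> return_time \<alpha> Y ` Y \<Longrightarrow> \<exists>k\<in>{1..nret \<alpha> Y}. rk \<alpha> Y k = v"
proof -
  let ?S = "return_time \<alpha> Y ` Y"
  let ?L = "sorted_list_of_set ?S"
  have len: "length ?L = nret \<alpha> Y" unfolding nret_def using fin by simp
  have setL: "set ?L = ?S" using fin by simp
  have ss: "sorted_wrt (<) ?L" using strict_sorted_list_of_set by blast
  show "\<And>k. k \<in> {1..nret \<alpha> Y} \<Longrightarrow> rk \<alpha> Y k \<in> ?S"
    unfolding rk_def using len setL by (metis atLeastAtMost_iff diff_less less_le_trans nth_mem zero_less_one)
  show "\<And>k k'. k \<in> {1..nret \<alpha> Y} \<Longrightarrow> k' \<in> {1..nret \<alpha> Y} \<Longrightarrow> k < k' \<Longrightarrow> rk \<alpha> Y k < rk \<alpha> Y k'"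
  proof -
    fix k k' assume a: "k \<in> {1..nret \<alpha> Y}" "k' \<in> {1..nret \<alpha> Y}" "k < k'"
    then have "k - 1 < k' - 1" "k' - 1 < length ?L" using len by auto
    then show "rk \<alpha> Y k < rk \<alpha> Y k'" unfolding rk_def using sorted_wrt_nth_less[OF ss] by blast
  qed
  show "\<And>v. v \<in> ?S \<Longrightarrow> \<exists>k\<in>{1..nret \<alpha> Y}. rk \<alpha> Y k = v"
  proof -
    fix v assume "v \<in> ?S"
    then obtain n where n: "n < length ?L" "?L ! n = v" using setL by (metis in_set_conv_nth)
    then show "\<exists>k\<in>{1..nret \<alpha> Y}. rk \<alpha> Y k = v" unfolding rk_def using len
      by (intro bexI[of _ "Suc n"]) auto
  qed
qed

primrec hitT :: "('a \<Rightarrow> 'a) \<Rightarrow> 'a set \<Rightarrow> 'a \<Rightarrow> nat \<Rightarrow> nat" where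
  "hitT \<alpha> Y x 0 = 0"
| "hitT \<alpha> Y x (Suc s) = hitT \<alpha> Y x s + return_time \<alpha> Y ((\<alpha>^^hitT \<alpha> Y x s) x)"

lemma Rsum_Suc: "Rsum \<alpha> Y t (Suc s) = Rsum \<alpha> Y t s + rk \<alpha> Y (t (Suc s))"
  unfolding Rsum_def by simp

lemma Rsum_mono: "s \<le> s' \<Longrightarrow> Rsum \<alpha> Y t s \<le> Rsum \<alpha> Y t s'"
  unfolding Rsum_def by (rule sum_mono2) auto

lemma funpow_comb: "(f^^n) ((f^^m) x) = (f^^(n+m)) x"
  by (simp only: funpow_add comp_apply)

theorem corollary8p4:
  fixes \<alpha> :: "'a::metric_space \<Rightarrow> 'a" and Y :: "'a set"
    and U :: "'c \<Rightarrow> 'a set" and g :: "'c \<Rightarrow> 'c \<Rightarrow> 'a \<Rightarrow> complex"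
    and \<sigma> :: "nat \<Rightarrow> 'a \<Rightarrow> (nat \<Rightarrow> 'c) \<Rightarrow> nat \<Rightarrow> nat \<Rightarrow> complex"
  assumes "compact (UNIV :: 'a set)" and "infinite (UNIV :: 'a set)"
    and "minimal_homeo \<alpha>"
    and "hermitian_line_bundle U g"
    and "closed Y" and "interior Y \<noteq> {}"
    and "\<forall>k\<in>{1..nret \<alpha> Y}. end_section U g \<alpha> (rk \<alpha> Y k) (closure (Ysub \<alpha> Y k)) (\<sigma> k)"
  shows "in_pi_CX U \<alpha> Y \<sigma> \<longleftrightarrow>
           boundary_decomposition U \<alpha> Y \<sigma> \<and> diagonal_sections U \<alpha> Y \<sigma>"
proof -
  note cpt = assms(1) and mh = assms(3) and hlb = assms(4) and clY = assms(5)
    and intY = assms(6) and es = assms(7)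
  obtain \<beta> where hom: "homeomorphism UNIV UNIV \<alpha> \<beta>" using mh unfolding minimal_homeo_def by blast
  have ba: "\<And>x. \<beta> (\<alpha> x) = x" and ab: "\<And>x. \<alpha> (\<beta> x) = x"
    and ca: "continuous_on UNIV \<alpha>" and cb: "continuous_on UNIV \<beta>"
    using hom unfolding homeomorphism_def by auto
  define rt where "rt = return_time \<alpha> Y"
  define K where "K = nret \<alpha> Y"
  define r where "r = rk \<alpha> Y"
  define Ys where "Ys = Ysub \<alpha> Y"
  obtain M where M: "\<And>z. \<exists>j. 1 \<le> j \<and> j \<le> M \<and> (\<alpha>^^j) z \<in> Y"
    using minimal_bound[OF cpt mh intY] by blast
  have rt1: "1 \<le> rt z \<and> (\<alpha>^^rt z) z \<in> Y \<and> rt z \<le> M" for z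
  proof -
    obtain j where j: "1 \<le> j" "j \<le> M" "(\<alpha>^^j) z \<in> Y" using M by blast
    have "1 \<le> rt z \<and> (\<alpha>^^rt z) z \<in> Y" unfolding rt_def return_time_def
      by (rule LeastI[of _ j]) (use j in auto)
    moreover have "rt z \<le> j" unfolding rt_def return_time_def by (rule Least_le) (use j in auto)
    ultimately show ?thesis using j by auto
  qed
  have rtle: "\<And>z n. 1 \<le> n \<Longrightarrow> (\<alpha>^^n) z \<in> Y \<Longrightarrow> rt z \<le> n"
    unfolding rt_def return_time_def by (rule Least_le) auto
  have rtmin: "\<And>z n. 1 \<le> n \<Longrightarrow> n < rt z \<Longrightarrow> (\<alpha>^^n) z \<notin> Y"
    using rtle by fastforce
  have fin: "finite (rt ` Y)"
    by (rule finite_subset[of _ "{..M}"]) (use rt1 in auto)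
  note rkf = rk_facts[OF fin[unfolded rt_def]]
  have rk_in: "\<And>k. k \<in> {1..K} \<Longrightarrow> r k \<in> rt ` Y" using rkf(1) unfolding K_def r_def rt_def by blast
  have rk_mono: "\<And>k k'. k \<in> {1..K} \<Longrightarrow> k' \<in> {1..K} \<Longrightarrow> k < k' \<Longrightarrow> r k < r k'"
    using rkf(2) unfolding K_def r_def by blast
  have rk_surj: "\<And>v. v \<in> rt ` Y \<Longrightarrow> \<exists>k\<in>{1..K}. r k = v"
    using rkf(3) unfolding K_def r_def rt_def by blast
  have rk_inj: "\<And>k k'. k \<in> {1..K} \<Longrightarrow> k' \<in> {1..K} \<Longrightarrow> r k = r k' \<Longrightarrow> k = k'"
    using rk_mono by (metis less_irrefl nat_neq_iff)
  have rk_le: "\<And>k k'. k \<in> {1..K} \<Longrightarrow> k' \<in> {1..K} \<Longrightarrow> r k < r k' \<Longrightarrow> k < k'"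
    using rk_mono by (metis less_asym nat_neq_iff)
  have rk1: "\<And>k. k \<in> {1..K} \<Longrightarrow> 1 \<le> r k" using rk_in rt1 by force
  have Ys_def': "\<And>k. Ys k = {y \<in> Y. rt y = r k}" unfolding Ys_def Ysub_def rt_def r_def by simp
  have clYs: "\<And>k. closure (Ys k) \<subseteq> Y" using clY Ys_def' by (intro closure_minimal) auto
  have clret: "\<And>k x. x \<in> closure (Ys k) \<Longrightarrow> (\<alpha>^^r k) x \<in> Y"
  proof -
    fix k x assume x: "x \<in> closure (Ys k)"
    have "closed ((\<alpha>^^r k) -` Y)" using funpow_cont[OF ca] clY by (metis closed_vimage)
    moreover have "Ys k \<subseteq> (\<alpha>^^r k) -` Y" using Ys_def' rt1 by (auto dest: sym)
    ultimately have "closure (Ys k) \<subseteq> (\<alpha>^^r k) -` Y" by (rule closure_minimal[rotated])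
    then show "(\<alpha>^^r k) x \<in> Y" using x by auto
  qed
  define ch where "ch x = (\<lambda>m. SOME a. (\<alpha>^^m) x \<in> U a)" for x
  have chok: "\<And>n x. chart_ok U \<alpha> n x (ch x)" unfolding ch_def using chart_exists[OF hlb] by blast
  have chall: "\<And>m x. (\<alpha>^^m) x \<in> U (ch x m)" using chok unfolding chart_ok_def by (meson lessI)
  have es': "\<And>k. k \<in> {1..K} \<Longrightarrow> end_section U g \<alpha> (r k) (closure (Ys k)) (\<sigma> k)"
    using es unfolding K_def r_def Ys_def by blast
  have Rs_split: "\<And>t s. 1 \<le> s \<Longrightarrow> Rsum \<alpha> Y t s = Rsum \<alpha> Y t (s-1) + r (t s)"
  proof -
    fix t s assume s1: "1 \<le> (s::nat)"
    have "Suc (s - 1) = s" using s1 by simp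
    then show "Rsum \<alpha> Y t s = Rsum \<alpha> Y t (s-1) + r (t s)"
      using Rsum_Suc[of \<alpha> Y t "s-1"] unfolding r_def by simp
  qed
  show ?thesis
  proof
    assume "in_pi_CX U \<alpha> Y \<sigma>"
    then obtain f :: "'a \<Rightarrow> complex" where f:
      "\<And>k x c i j. k \<in> {1..K} \<Longrightarrow> x \<in> closure (Ys k) \<Longrightarrow> chart_ok U \<alpha> (r k) x c \<Longrightarrow>
        i < r k \<Longrightarrow> j < r k \<Longrightarrow> \<sigma> k x c i j = (if i = j then f ((\<alpha> ^^ i) x) else 0)"
      unfolding in_pi_CX_def K_def r_def Ys_def by blast
    have "diagonal_sections U \<alpha> Y \<sigma>"
      unfolding diagonal_sections_def K_def[symmetric] r_def[symmetric] Ys_def[symmetric]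
    proof (intro ballI allI impI)
      fix k x c i j assume "k \<in> {1..K}" "x \<in> closure (Ys k)" "chart_ok U \<alpha> (r k) x c"
        "i < r k" "j < r k" "i \<noteq> j"
      then show "\<sigma> k x c i j = 0" using f by simp
    qed
    moreover have "boundary_decomposition U \<alpha> Y \<sigma>"
      unfolding boundary_decomposition_def K_def[symmetric] r_def[symmetric] Ys_def[symmetric]
    proof (intro ballI allI impI)
      fix k x m t s c j i
      assume k: "k \<in> {1..K}" and x: "x \<in> closure (Ys k) - Ys k"
        and cond: "(\<forall>s\<in>{1..m}. 1 \<le> t s \<and> t s < k) \<and> Rsum \<alpha> Y t m = r k \<and>
          (\<forall>s\<in>{1..m}. (\<alpha> ^^ Rsum \<alpha> Y t (s - 1)) x \<in> Ys (t s))"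
        and s: "s \<in> {1..m}" and c: "chart_ok U \<alpha> (r k) x c"
        and j: "Rsum \<alpha> Y t (s - 1) \<le> j \<and> j < Rsum \<alpha> Y t s" and i: "i < r k"
      define R where "R = Rsum \<alpha> Y t (s - 1)"
      have c1: "\<forall>s\<in>{1..m}. 1 \<le> t s \<and> t s < k" and c2: "Rsum \<alpha> Y t m = r k"
        and c3: "\<forall>s\<in>{1..m}. (\<alpha> ^^ Rsum \<alpha> Y t (s - 1)) x \<in> Ys (t s)" using cond by blast+
      have s1: "1 \<le> s" "s \<le> m" using s by auto
      have Rs: "Rsum \<alpha> Y t s = R + r (t s)" unfolding R_def by (rule Rs_split[OF s1(1)])
      have sm: "Rsum \<alpha> Y t s \<le> r k" using Rsum_mono[OF s1(2), of \<alpha> Y t] c2 by simp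
      have ts: "t s \<in> {1..K}" using c1 s k by fastforce
      have y: "(\<alpha>^^R) x \<in> closure (Ys (t s))" unfolding R_def using c3 s closure_subset by blast
      have cy: "chart_ok U \<alpha> (r (t s)) ((\<alpha>^^R) x) (\<lambda>n. c (n + R))"
        unfolding chart_ok_def
      proof (intro allI impI)
        fix n assume "n < r (t s)"
        then have "n + R < r k" using Rs sm by auto
        then show "(\<alpha>^^n) ((\<alpha>^^R) x) \<in> U (c (n + R))" using c unfolding chart_ok_def funpow_comb by blast
      qed
      have jr: "j < r k" using j sm by auto
      show "\<sigma> k x c i j = (if R \<le> i \<and> i < Rsum \<alpha> Y t s
             then \<sigma> (t s) ((\<alpha>^^R) x) (\<lambda>n. c (n + R)) (i - R) (j - R) else 0)"
      proof (cases "R \<le> i \<and> i < Rsum \<alpha> Y t s")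
        case True
        have "\<sigma> (t s) ((\<alpha>^^R) x) (\<lambda>n. c (n + R)) (i - R) (j - R) =
            (if i - R = j - R then f ((\<alpha>^^(i-R)) ((\<alpha>^^R) x)) else 0)"
        proof -
          have "i - R < r (t s)" "j - R < r (t s)" using True j Rs R_def by linarith+
          from f[OF ts y cy this] show ?thesis by simp
        qed
        also have "\<dots> = (if i = j then f ((\<alpha>^^i) x) else 0)"
          using True j R_def by (auto simp: funpow_comb)
        also have "\<dots> = \<sigma> k x c i j" using f[OF k _ c i jr] x by auto
        finally show ?thesis using True by simp
      next
        case False
        then have "i \<noteq> j" using j unfolding R_def by linarith
        then show ?thesis using f[OF k _ c i jr] x False by auto
      qed
    qed
    ultimately show "boundary_decomposition U \<alpha> Y \<sigma> \<and> diagonal_sections U \<alpha> Y \<sigma>" by blast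
  next
    assume bdg: "boundary_decomposition U \<alpha> Y \<sigma> \<and> diagonal_sections U \<alpha> Y \<sigma>"
    note bd' = bdg[THEN conjunct1, unfolded boundary_decomposition_def K_def[symmetric] r_def[symmetric] Ys_def[symmetric]]
    note dg' = bdg[THEN conjunct2, unfolded diagonal_sections_def K_def[symmetric] r_def[symmetric] Ys_def[symmetric]]
    define D where "D k x i = \<sigma> k x (ch x) i i" for k x i
    have Dind: "\<And>k x c i. k \<in> {1..K} \<Longrightarrow> x \<in> closure (Ys k) \<Longrightarrow> chart_ok U \<alpha> (r k) x c \<Longrightarrow> i < r k
       \<Longrightarrow> \<sigma> k x c i i = D k x i"
      unfolding D_def using chart_indep[OF hlb es' _ chok] by blast
    define j0 where "j0 z = (LEAST j. (\<beta>^^j) z \<in> Y)" for z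
    define idx where "idx v = (SOME k. k \<in> {1..K} \<and> r k = v)" for v
    define F where "F z = D (idx (rt ((\<beta>^^j0 z) z))) ((\<beta>^^j0 z) z) (j0 z)" for z
    have idx_in: "\<And>v. v \<in> rt ` Y \<Longrightarrow> idx v \<in> {1..K} \<and> r (idx v) = v"
      unfolding idx_def using rk_surj by (metis (mono_tags, lifting) someI_ex)
    have idx_k: "\<And>k. k \<in> {1..K} \<Longrightarrow> idx (r k) = k"
      using idx_in rk_in rk_inj by metis
    have claim1: "\<And>k x i. k \<in> {1..K} \<Longrightarrow> x \<in> Ys k \<Longrightarrow> i < r k \<Longrightarrow> F ((\<alpha>^^i) x) = D k x i"
    proof -
      fix k x i assume k: "k \<in> {1..K}" and x: "x \<in> Ys k" and i: "i < r k"
      define z where "z = (\<alpha>^^i) x"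
      have bz: "(\<beta>^^i) z = x" unfolding z_def using funpow_inv[of \<beta> \<alpha>] ba by blast
      have xY: "x \<in> Y" and rtx: "rt x = r k" using x Ys_def' by auto
      have "j0 z = i" unfolding j0_def
      proof (rule Least_equality)
        show "(\<beta>^^i) z \<in> Y" using bz xY by simp
        fix j assume j: "(\<beta>^^j) z \<in> Y"
        show "i \<le> j"
        proof (rule ccontr)
          assume "\<not> i \<le> j"
          then have ji: "j < i" by simp
          have "(\<beta>^^j) z = (\<alpha>^^(i-j)) x" unfolding z_def using funpow_inv_le[of \<beta> \<alpha> j i x] ba ji by simp
          moreover have "(\<alpha>^^(i-j)) x \<notin> Y" using rtmin[of "i-j" x] ji i rtx by simp
          ultimately show False using j by simp
        qed
      qed
      then show "F ((\<alpha>^^i) x) = D k x i" unfolding F_def z_def[symmetric] using bz rtx idx_k[OF k] by simp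
    qed
    have claim2: "\<And>k x i. k \<in> {1..K} \<Longrightarrow> x \<in> closure (Ys k) \<Longrightarrow> i < r k \<Longrightarrow> D k x i = F ((\<alpha>^^i) x)"
    proof -
      fix k x i assume k: "k \<in> {1..K}" and x: "x \<in> closure (Ys k)" and i: "i < r k"
      show "D k x i = F ((\<alpha>^^i) x)"
      proof (cases "x \<in> Ys k")
        case True
        then show ?thesis using claim1 k i by simp
      next
        case False
        note nx = False
        define T where "T = hitT \<alpha> Y x"
        have xY: "x \<in> Y" using clYs x by blast
        have Tsuc: "\<And>s. T (Suc s) = T s + rt ((\<alpha>^^T s) x)" unfolding T_def rt_def by simp
        have T0: "T 0 = 0" unfolding T_def by simp
        have hY: "\<And>s. (\<alpha>^^T s) x \<in> Y"
        proof -
          fix s show "(\<alpha>^^T s) x \<in> Y"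
          proof (induction s)
            case 0 then show ?case using T0 xY by simp
          next
            case (Suc s)
            have "(\<alpha>^^T (Suc s)) x = (\<alpha>^^rt ((\<alpha>^^T s) x)) ((\<alpha>^^T s) x)"
              unfolding Tsuc funpow_comb by (simp add: add.commute)
            then show ?case using rt1 by simp
          qed
        qed
        have Tlt: "\<And>n. T n < T (Suc n)"
        proof -
          fix n show "T n < T (Suc n)" using Tsuc[of n] rt1[of "(\<alpha>^^T n) x"] by simp
        qed
        have smT: "strict_mono T" unfolding strict_mono_Suc_iff using Tlt by blast
        have Tge: "\<And>s. s \<le> T s"
        proof -
          fix s show "s \<le> T s"
          proof (induction s)
            case 0 then show ?case by simp
          next
            case (Suc s) then show ?case using Tlt[of s] by simp
          qed
        qed
        define m where "m = (LEAST s. r k \<le> T s)"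
        have rkm: "r k \<le> T m" unfolding m_def by (rule LeastI[of _ "r k"]) (rule Tge)
        have rk1k: "1 \<le> r k" using rk1 k by blast
        have m1: "1 \<le> m"
        proof (rule ccontr)
          assume "\<not> 1 \<le> m"
          then have "m = 0" by simp
          then show False using rkm T0 rk1k by simp
        qed
        have Tm1: "T (m-1) < r k"
          using not_less_Least[of "m-1" "\<lambda>s. r k \<le> T s"] m1 unfolding m_def[symmetric] by simp
        have Tm: "T m = r k"
        proof -
          have e: "Suc (m-1) = m" using m1 by simp
          have "T m = T (m-1) + rt ((\<alpha>^^T (m-1)) x)" using Tsuc[of "m-1"] e by simp
          moreover have "rt ((\<alpha>^^T (m-1)) x) \<le> r k - T (m-1)"
          proof (rule rtle)
            show "1 \<le> r k - T (m-1)" using Tm1 by simp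
            have "(\<alpha>^^(r k - T (m-1))) ((\<alpha>^^T (m-1)) x) = (\<alpha>^^r k) x"
              unfolding funpow_comb using Tm1 by simp
            then show "(\<alpha>^^(r k - T (m-1))) ((\<alpha>^^T (m-1)) x) \<in> Y" using clret x by simp
          qed
          ultimately show ?thesis using rkm Tm1 by linarith
        qed
        define t where "t s = idx (rt ((\<alpha>^^T (s-1)) x))" for s
        have tprop: "\<And>s. t s \<in> {1..K} \<and> r (t s) = rt ((\<alpha>^^T (s-1)) x)"
          unfolding t_def using idx_in hY by blast
        have RT: "\<And>s. Rsum \<alpha> Y t s = T s"
        proof -
          fix s show "Rsum \<alpha> Y t s = T s"
          proof (induction s)
            case 0 then show ?case using T0 unfolding Rsum_def by simp
          next
            case (Suc s)
            have "Rsum \<alpha> Y t (Suc s) = T s + r (t (Suc s))" unfolding r_def Rsum_Suc[of \<alpha> Y t s] Suc.IH by (rule refl)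
            also have "\<dots> = T (Suc s)" using tprop[of "Suc s"] Tsuc by simp
            finally show ?case .
          qed
        qed
        have tk: "\<And>s. s \<in> {1..m} \<Longrightarrow> 1 \<le> t s \<and> t s < k"
        proof -
          fix s assume s: "s \<in> {1..m}"
          have e: "Suc (s-1) = s" using s by simp
          have Ts: "T s = T (s-1) + r (t s)" using Tsuc[of "s-1"] tprop[of s] e by simp
          have Tsm: "T s \<le> r k" using Tm s strict_mono_less_eq[OF smT, of s m] by simp
          have "r (t s) < r k"
          proof (rule ccontr)
            assume "\<not> r (t s) < r k"
            then have "T (s-1) = 0" using Ts Tsm by simp
            then have "s - 1 = 0" using Tge[of "s-1"] by simp
            then have "s = 1" using s by simp
            then have "rt x = r k" using Ts Tsm \<open>T (s-1) = 0\<close> \<open>\<not> r (t s) < r k\<close> tprop[of s] by simp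
            then have "x \<in> Ys k" using xY Ys_def' by simp
            then show False using nx by simp
          qed
          then have "t s < k" using rk_le tprop[of s] k by blast
          then show "1 \<le> t s \<and> t s < k" using tprop[of s] by simp
        qed
        have cond: "(\<forall>s\<in>{1..m}. 1 \<le> t s \<and> t s < k) \<and> Rsum \<alpha> Y t m = r k \<and>
          (\<forall>s\<in>{1..m}. (\<alpha> ^^ Rsum \<alpha> Y t (s - 1)) x \<in> Ys (t s))"
          using tk RT Tm tprop hY Ys_def' by simp
        define s where "s = (LEAST s. i < T s)"
        have is1: "i < T s" unfolding s_def by (rule LeastI[of _ m]) (use Tm i in simp)
        have s1: "1 \<le> s"
        proof (rule ccontr)
          assume "\<not> 1 \<le> s" then have "s = 0" by simp
          then show False using is1 T0 by simp
        qed
        have is0: "T (s-1) \<le> i"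
          using not_less_Least[of "s-1" "\<lambda>s. i < T s"] s1 unfolding s_def[symmetric] by simp
        have sm: "s \<le> m" unfolding s_def by (rule Least_le) (use Tm i in simp)
        have sin: "s \<in> {1..m}" using s1 sm by simp
        have xd: "x \<in> closure (Ys k) - Ys k" using x nx by simp
        have ib: "Rsum \<alpha> Y t (s - 1) \<le> i \<and> i < Rsum \<alpha> Y t s" using RT is0 is1 by simp
        have "\<sigma> k x (ch x) i i = (if Rsum \<alpha> Y t (s - 1) \<le> i \<and> i < Rsum \<alpha> Y t s
                then \<sigma> (t s) ((\<alpha> ^^ Rsum \<alpha> Y t (s - 1)) x) (\<lambda>n. ch x (n + Rsum \<alpha> Y t (s - 1)))
                        (i - Rsum \<alpha> Y t (s - 1)) (i - Rsum \<alpha> Y t (s - 1))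
                else 0)"
          by (rule bd'[rule_format, OF k xd cond sin chok ib i])
        then have e1: "D k x i = \<sigma> (t s) ((\<alpha> ^^ T (s-1)) x) (\<lambda>n. ch x (n + T (s-1))) (i - T (s-1)) (i - T (s-1))"
          unfolding D_def using ib unfolding RT by simp
        define y where "y = (\<alpha> ^^ T (s-1)) x"
        have es1: "Suc (s-1) = s" using s1 by simp
        have ts: "t s \<in> {1..K}" using tprop[of s] by blast
        have rts: "r (t s) = rt y" unfolding y_def using tprop[of s] by blast
        have yY: "y \<in> Y" unfolding y_def by (rule hY)
        have yYs: "y \<in> Ys (t s)" using yY rts Ys_def'[of "t s"] by simp
        have yc: "y \<in> closure (Ys (t s))" using yYs closure_subset by blast
        have Ts: "T s = T (s-1) + r (t s)" using Tsuc[of "s-1"] rts unfolding es1 y_def by simp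
        have ir: "i - T (s-1) < r (t s)" using is0 is1 Ts by simp
        have cy: "chart_ok U \<alpha> (r (t s)) y (\<lambda>n. ch x (n + T (s-1)))"
          unfolding chart_ok_def y_def funpow_comb by (simp add: chall)
        have "D k x i = \<sigma> (t s) y (\<lambda>n. ch x (n + T (s-1))) (i - T (s-1)) (i - T (s-1))"
          using e1 unfolding y_def .
        also have "\<dots> = D (t s) y (i - T (s-1))" by (rule Dind[OF ts yc cy ir])
        also have "\<dots> = F ((\<alpha>^^(i - T (s-1))) y)" using claim1[OF ts yYs ir] by simp
        also have "\<dots> = F ((\<alpha>^^i) x)" unfolding y_def funpow_comb using is0 by simp
        finally show ?thesis .
      qed
    qed
    have contD: "\<And>k i. k \<in> {1..K} \<Longrightarrow> i < r k \<Longrightarrow> continuous_on (closure (Ys k)) (\<lambda>x. D k x i)"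
    proof -
      fix k i assume k: "k \<in> {1..K}" and i: "i < r k"
      let ?S = "closure (Ys k)"
      show "continuous_on ?S (\<lambda>x. D k x i)"
        unfolding continuous_on_eq_continuous_within
      proof
        fix x0 assume x0: "x0 \<in> ?S"
        define V where "V = {x. chart_ok U \<alpha> (r k) x (ch x0)}"
        have Veq: "V = (\<Inter>m\<in>{..<r k}. (\<alpha>^^m) -` U (ch x0 m))"
          unfolding V_def chart_ok_def by auto
        have oU: "\<And>a. open (U a)" using hlb unfolding hermitian_line_bundle_def by blast
        have oV: "open V" unfolding Veq
          by (intro open_INT finite_lessThan ballI open_vimage oU funpow_cont[OF ca])
        have x0V: "x0 \<in> V" unfolding V_def using chok by simp
        have c1: "continuous_on {x \<in> ?S. chart_ok U \<alpha> (r k) x (ch x0)} (\<lambda>x. \<sigma> k x (ch x0) i i)"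
          using es'[OF k] i unfolding end_section_def by blast
        have seq: "{x \<in> ?S. chart_ok U \<alpha> (r k) x (ch x0)} = ?S \<inter> V" unfolding V_def by auto
        have c2: "continuous_on (?S \<inter> V) (\<lambda>x. D k x i)"
        proof (rule continuous_on_cong[THEN iffD1, OF refl _ c1[unfolded seq]])
          fix x assume "x \<in> ?S \<inter> V"
          then show "\<sigma> k x (ch x0) i i = D k x i" using Dind[OF k _ _ i] unfolding V_def by blast
        qed
        have "continuous (at x0 within (?S \<inter> V)) (\<lambda>x. D k x i)"
          using c2 x0 x0V continuous_on_eq_continuous_within by blast
        moreover have "at x0 within (?S \<inter> V) = at x0 within ?S"
          by (rule at_within_nhd[OF x0V oV]) auto
        ultimately show "continuous (at x0 within ?S) (\<lambda>x. D k x i)" by simp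
      qed
    qed
    define P where "P ki = (\<beta>^^snd ki) -` closure (Ys (fst ki))" for ki
    define I where "I = Sigma {1..K} (\<lambda>k. {..<r k})"
    have finI: "finite I" unfolding I_def by (intro finite_SigmaI) auto
    have clP: "\<And>ki. closed (P ki)" unfolding P_def
      by (intro closed_vimage closed_closure funpow_cont[OF cb])
    have contP: "\<And>ki. ki \<in> I \<Longrightarrow> continuous_on (P ki) F"
    proof -
      fix ki assume ki: "ki \<in> I"
      obtain k i where kie: "ki = (k, i)" by fastforce
      have k: "k \<in> {1..K}" and i: "i < r k" using ki kie I_def by auto
      have c: "continuous_on (P ki) (\<lambda>z. D k ((\<beta>^^i) z) i)"
        by (rule continuous_on_compose2[OF contD[OF k i]])
           (use continuous_on_subset[OF funpow_cont[OF cb, of i], of "P ki"] in \<open>auto simp: P_def kie\<close>)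
      show "continuous_on (P ki) F"
      proof (rule continuous_on_cong[THEN iffD1, OF refl _ c])
        fix z assume "z \<in> P ki"
        then have zc: "(\<beta>^^i) z \<in> closure (Ys k)" unfolding P_def kie by simp
        have "(\<alpha>^^i) ((\<beta>^^i) z) = z" using funpow_inv[of \<alpha> \<beta>] ab by blast
        then show "D k ((\<beta>^^i) z) i = F z" using claim2[OF k zc i] by simp
      qed
    qed
    have cover: "UNIV \<subseteq> (\<Union>ki\<in>I. P ki)"
    proof
      fix z :: 'a
      obtain j' where j': "1 \<le> j'" "j' \<le> M" "(\<alpha>^^j') ((\<beta>^^M) z) \<in> Y" using M by blast
      have "(\<beta>^^(M - j')) z \<in> Y" using j' funpow_inv_le[of \<alpha> \<beta> j' M z] ab by simp
      then have ex: "\<exists>j. (\<beta>^^j) z \<in> Y" by blast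
      define y0 where "y0 = (\<beta>^^j0 z) z"
      have y0Y: "y0 \<in> Y" unfolding y0_def j0_def using ex by (metis LeastI_ex)
      define k0 where "k0 = idx (rt y0)"
      have k0: "k0 \<in> {1..K}" and rk0: "r k0 = rt y0" using idx_in y0Y k0_def by auto
      have "y0 \<in> Ys k0" using y0Y rk0 Ys_def'[of k0] by simp
      then have y0c: "y0 \<in> closure (Ys k0)" using closure_subset by blast
      have jlt: "j0 z < r k0"
      proof (rule ccontr)
        assume "\<not> j0 z < r k0"
        then have le: "rt y0 \<le> j0 z" using rk0 by simp
        have "(\<alpha>^^rt y0) y0 = (\<beta>^^(j0 z - rt y0)) z"
          using funpow_inv_le[of \<alpha> \<beta> "rt y0" "j0 z" z, folded y0_def] ab le by simp
        then have "(\<beta>^^(j0 z - rt y0)) z \<in> Y" using rt1 by metis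
        then have "j0 z \<le> j0 z - rt y0" unfolding j0_def by (rule Least_le)
        then show False using rt1[of y0] le by linarith
      qed
      have "z \<in> P (k0, j0 z)" unfolding P_def using y0c y0_def by simp
      moreover have "(k0, j0 z) \<in> I" unfolding I_def using k0 jlt by simp
      ultimately show "z \<in> (\<Union>ki\<in>I. P ki)" by blast
    qed
    have contF: "continuous_on UNIV F"
    proof -
      have "continuous_on (\<Union>ki\<in>I. P ki) F"
        by (rule continuous_on_closed_Union[OF finI clP contP])
      then show ?thesis using cover by (metis continuous_on_subset)
    qed
    show "in_pi_CX U \<alpha> Y \<sigma>"
      unfolding in_pi_CX_def K_def[symmetric] r_def[symmetric] Ys_def[symmetric]
    proof (intro exI conjI ballI allI impI)
      show "continuous_on UNIV F" by (rule contF)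
      fix k x c i j assume k: "k \<in> {1..K}" and x: "x \<in> closure (Ys k)" and c: "chart_ok U \<alpha> (r k) x c"
        and i: "i < r k" and j: "j < r k"
      show "\<sigma> k x c i j = (if i = j then F ((\<alpha>^^i) x) else 0)"
      proof (cases "i = j")
        case True
        then show ?thesis using Dind[OF k x c i] claim2[OF k x i] by simp
      next
        case False
        then show ?thesis using dg' k x c i j by simp
      qed
    qed
  qed
qed

end
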